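(* Let a system $u_{n+1,x}^j = F^j(x,n,u_{n,x}^j,u_n,u_{n+1})$, $j=1,\dots,N$, be the compatibility condition of the linear systems $$\Phi_{n+1}=U_n\Phi_n,\qquad \Phi_{n,x}=V_n\Phi_n,$$ i.e. $D_xU_n=V_{n+1}U_n-U_nV_n$ holds by virtue of the system, where $U_n=(a_{ik,n})$ is an $m\times m$ upper triangular matrix and $V_n=(b_{ik,n})$ is an $m\times m$ lower triangular matrix, with entries functions of the dynamical variables. For $k\ge0$ let $P^{(k)}_n=U_{n+k}U_{n+k-1}\cdots U_n$ and let $p^{(k)}_{1m,n}$ denote its entry in the first row and last column. If $D_nb_{11,n}=b_{11,n}$ and $b_{11,n}=b_{mm,n}$, then $J=p^{(k)}_{1m,n}$ is an $x$-integral of the system, i.e. $D_xJ=0$ by virtue of the system.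
   Context: The dynamical variables are $u^j_n,u^j_{n\pm1},\dots$ and $u^j_{n,x},u^j_{n,xx},\dots$, treated as independent; $D_n$ is the shift $D_ny(n)=y(n+1)$ and $D_x$ is the total $x$-derivative, with $x$-derivatives of shifted variables expressed through the system (and its converse form $u^j_{n-1,x}=G^j(x,n,u^j_{n,x},u_n,u_{n-1})$, assumed to exist). A function $J$ of $x,n$ and $u_n,u_{n\pm1},u_{n\pm2},\dots$ is called an $x$-integral if $D_xJ=0$ holds by virtue of the system. *)

theory Defs
  imports Main
begin

text \<open>Abstract differential-difference ring: the ring of functions of the dynamical
  variables (modulo the system).  Dx is the total x-derivative (a derivation),
  Dn is the shift operator (a ring endomorphism), and they commute by virtue
  of the system.\<close>

definition is_derivation :: "('a::comm_ring_1 \<Rightarrow> 'a) \<Rightarrow> bool" where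
  "is_derivation D \<longleftrightarrow> (\<forall>a b. D (a + b) = D a + D b) \<and> (\<forall>a b. D (a * b) = D a * b + a * D b)"

definition is_ring_endo :: "('a::comm_ring_1 \<Rightarrow> 'a) \<Rightarrow> bool" where
  "is_ring_endo S \<longleftrightarrow> (\<forall>a b. S (a + b) = S a + S b) \<and> (\<forall>a b. S (a * b) = S a * S b)
     \<and> S 0 = 0 \<and> S 1 = 1"

definition diff_diff_ring :: "('a::comm_ring_1 \<Rightarrow> 'a) \<Rightarrow> ('a \<Rightarrow> 'a) \<Rightarrow> bool" where
  "diff_diff_ring Dx Dn \<longleftrightarrow> is_derivation Dx \<and> is_ring_endo Dn \<and> (\<forall>a. Dx (Dn a) = Dn (Dx a))"

text \<open>m x m matrices with rows/columns indexed by 1..m.\<close>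
type_synonym 'a mat = "nat \<Rightarrow> nat \<Rightarrow> 'a"

definition mat_mult :: "nat \<Rightarrow> 'a::comm_ring_1 mat \<Rightarrow> 'a mat \<Rightarrow> 'a mat" where
  "mat_mult m A B = (\<lambda>i k. \<Sum>j\<in>{1..m}. A i j * B j k)"

definition upper_triangular :: "nat \<Rightarrow> 'a::zero mat \<Rightarrow> bool" where
  "upper_triangular m A \<longleftrightarrow> (\<forall>i\<in>{1..m}. \<forall>k\<in>{1..m}. k < i \<longrightarrow> A i k = 0)"

definition lower_triangular :: "nat \<Rightarrow> 'a::zero mat \<Rightarrow> bool" where
  "lower_triangular m A \<longleftrightarrow> (\<forall>i\<in>{1..m}. \<forall>k\<in>{1..m}. i < k \<longrightarrow> A i k = 0)"

text \<open>Entrywise shift by j steps: the matrix A_{n+j} from A_n.\<close>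
definition mat_shift :: "('a \<Rightarrow> 'a) \<Rightarrow> nat \<Rightarrow> 'a mat \<Rightarrow> 'a mat" where
  "mat_shift Dn j A = (\<lambda>i k. (Dn ^^ j) (A i k))"

fun Pmat :: "nat \<Rightarrow> ('a::comm_ring_1 \<Rightarrow> 'a) \<Rightarrow> 'a mat \<Rightarrow> nat \<Rightarrow> 'a mat" where
  "Pmat m Dn U 0 = U"
| "Pmat m Dn U (Suc k) = mat_mult m (mat_shift Dn (Suc k) U) (Pmat m Dn U k)"

end

theory Submission
  imports Defs
begin

lemma endo_funpow: "is_ring_endo S \<Longrightarrow> is_ring_endo (S ^^ j)"
  by (induction j) (auto simp: is_ring_endo_def)

lemma endo_sum:
  assumes "is_ring_endo S" shows "S (sum f A) = (\<Sum>x\<in>A. S (f x))"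
proof (cases "finite A")
  case True then show ?thesis
    using assms by (induction A rule: finite_induct) (auto simp: is_ring_endo_def)
next
  case False then show ?thesis using assms by (simp add: is_ring_endo_def)
qed

lemma endo_minus:
  assumes "is_ring_endo S" shows "S (a - b) = S a - S b"
proof -
  have "S (a - b) + S b = S a" using assms unfolding is_ring_endo_def
    by (metis diff_add_cancel)
  then show ?thesis by (simp add: eq_diff_eq)
qed

lemma endo_mm:
  assumes "is_ring_endo S"
  shows "S (mat_mult m A B i l) = mat_mult m (\<lambda>i k. S (A i k)) (\<lambda>i k. S (B i k)) i l"
  using assms by (simp add: mat_mult_def endo_sum is_ring_endo_def)

lemma der_zero: "is_derivation D \<Longrightarrow> D 0 = 0"
  unfolding is_derivation_def by (metis add_cancel_right_right add_0)

lemma der_sum: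
  assumes "is_derivation D" shows "D (sum f A) = (\<Sum>x\<in>A. D (f x))"
proof (cases "finite A")
  case True then show ?thesis
    using assms by (induction A rule: finite_induct) (auto simp: is_derivation_def der_zero)
next
  case False then show ?thesis using assms by (simp add: der_zero)
qed

lemma der_minus:
  assumes "is_derivation S" shows "S (a - b) = S a - S b"
proof -
  have "S (a - b) + S b = S a" using assms unfolding is_derivation_def
    by (metis diff_add_cancel)
  then show ?thesis by (simp add: eq_diff_eq)
qed

lemma mm_assoc: "mat_mult m (mat_mult m A B) C = mat_mult m A (mat_mult m B C)"
  unfolding mat_mult_def
  by (auto simp: sum_distrib_left sum_distrib_right mult.assoc intro!: ext sum.swap)

lemma dx_funpow:
  assumes "diff_diff_ring Dx Dn" shows "Dx ((Dn ^^ j) a) = (Dn ^^ j) (Dx a)"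
  using assms by (induction j arbitrary: a) (auto simp: diff_diff_ring_def)

lemma upper_mm:
  assumes "upper_triangular m A" "upper_triangular m B"
  shows "upper_triangular m (mat_mult m A B)"
  unfolding upper_triangular_def mat_mult_def
proof (intro ballI impI)
  fix i k assume "i \<in> {1..m}" "k \<in> {1..m}" "k < i"
  then show "(\<Sum>j\<in>{1..m}. A i j * B j k) = 0"
    using assms unfolding upper_triangular_def
    by (intro sum.neutral ballI) (metis atLeastAtMost_iff le_less_trans mult_not_zero not_less)
qed

lemma upper_shift:
  assumes "is_ring_endo S" "upper_triangular m A"
  shows "upper_triangular m (\<lambda>i k. S (A i k))"
  using assms by (simp add: upper_triangular_def is_ring_endo_def)

lemma lower_shift:
  assumes "is_ring_endo S" "lower_triangular m A"
  shows "lower_triangular m (\<lambda>i k. S (A i k))"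
  using assms by (simp add: lower_triangular_def is_ring_endo_def)

lemma sum_single:
  assumes "finite A" "a \<in> A" "\<forall>j\<in>A. j \<noteq> a \<longrightarrow> f j = 0"
  shows "sum f A = f a"
  using assms by (simp add: sum.remove)

theorem lemma4:
  fixes Dx Dn :: "'a::comm_ring_1 \<Rightarrow> 'a" and m :: nat and U V :: "'a mat" and k :: nat
  assumes "diff_diff_ring Dx Dn"
    and "m \<ge> 1"
    and "upper_triangular m U"
    and "lower_triangular m V"
    and "\<forall>i\<in>{1..m}. \<forall>l\<in>{1..m}.
           Dx (U i l) = mat_mult m (mat_shift Dn 1 V) U i l - mat_mult m U V i l"
    and "Dn (V 1 1) = V 1 1"
    and "V 1 1 = V m m"
  shows "Dx (Pmat m Dn U k 1 m) = 0"
proof -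
  have endo: "is_ring_endo Dn" and der: "is_derivation Dx"
    using assms(1) by (auto simp: diff_diff_ring_def)
  have endoj: "is_ring_endo (Dn ^^ j)" for j using endo_funpow[OF endo] .
  have shU: "Dx (mat_shift Dn j U i l) = mat_mult m (mat_shift Dn (Suc j) V) (mat_shift Dn j U) i l
      - mat_mult m (mat_shift Dn j U) (mat_shift Dn j V) i l"
    if "i \<in> {1..m}" "l \<in> {1..m}" for i l j
  proof -
    have "Dx (mat_shift Dn j U i l) = (Dn ^^ j) (Dx (U i l))"
      by (simp add: mat_shift_def dx_funpow[OF assms(1)])
    also have "\<dots> = (Dn ^^ j) (mat_mult m (mat_shift Dn 1 V) U i l) - (Dn ^^ j) (mat_mult m U V i l)"
      using assms(5) that by (simp add: endo_minus[OF endoj])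
    also have "\<dots> = mat_mult m (mat_shift Dn (Suc j) V) (mat_shift Dn j U) i l
      - mat_mult m (mat_shift Dn j U) (mat_shift Dn j V) i l"
      by (simp add: endo_mm[OF endoj] mat_shift_def funpow_Suc_right
          del: funpow.simps)
    finally show ?thesis .
  qed
  have main: "\<forall>i\<in>{1..m}. \<forall>l\<in>{1..m}. Dx (Pmat m Dn U k i l) =
      mat_mult m (mat_shift Dn (Suc k) V) (Pmat m Dn U k) i l - mat_mult m (Pmat m Dn U k) V i l"
  proof (induction k)
    case 0
    then show ?case using assms(5) by simp
  next
    case (Suc k)
    let ?P = "Pmat m Dn U k" and ?SU = "mat_shift Dn (Suc k) U"
      and ?SV = "mat_shift Dn (Suc k) V" and ?W = "mat_shift Dn (Suc (Suc k)) V"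
    show ?case
    proof (intro ballI)
      fix i l assume il: "i \<in> {1..m}" "l \<in> {1..m}"
      have "Dx (Pmat m Dn U (Suc k) i l) = (\<Sum>j\<in>{1..m}. Dx (?SU i j) * ?P j l + ?SU i j * Dx (?P j l))"
        using der by (simp add: mat_mult_def der_sum is_derivation_def)
      also have "\<dots> = (\<Sum>j\<in>{1..m}. (mat_mult m ?W ?SU i j - mat_mult m ?SU ?SV i j) * ?P j l
          + ?SU i j * (mat_mult m ?SV ?P j l - mat_mult m ?P V j l))"
        using il Suc.IH shU by (intro sum.cong) auto
      also have "\<dots> = mat_mult m (mat_mult m ?W ?SU) ?P i l - mat_mult m (mat_mult m ?SU ?SV) ?P i l
          + mat_mult m ?SU (mat_mult m ?SV ?P) i l - mat_mult m ?SU (mat_mult m ?P V) i l"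
        unfolding mat_mult_def[of m _ ?P] mat_mult_def[of m ?SU]
        by (simp add: algebra_simps sum.distrib sum_subtractf)
      also have "\<dots> = mat_mult m ?W (Pmat m Dn U (Suc k)) i l - mat_mult m (Pmat m Dn U (Suc k)) V i l"
        by (simp add: mm_assoc)
      finally show "Dx (Pmat m Dn U (Suc k) i l) = mat_mult m ?W (Pmat m Dn U (Suc k)) i l
          - mat_mult m (Pmat m Dn U (Suc k)) V i l" .
    qed
  qed
  have up: "upper_triangular m (Pmat m Dn U k)"
  proof (induction k)
    case 0 then show ?case using assms(3) by simp
  next
    case (Suc k) then show ?case
      using upper_mm[OF upper_shift[OF endoj[of "Suc k"] assms(3)] Suc.IH]
      by (simp only: Pmat.simps mat_shift_def)
  qed
  have lowW: "lower_triangular m (mat_shift Dn (Suc k) V)"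
    using lower_shift[OF endoj[of "Suc k"] assms(4)] by (simp only: mat_shift_def)
  have W11: "(Dn ^^ j) (V 1 1) = V 1 1" for j
    proof (induction j)
    case (Suc j) then show ?case using assms(6) by simp
  qed simp
  have W11': "Dn ((Dn ^^ k) (V (Suc 0) (Suc 0))) = V (Suc 0) (Suc 0)" using W11[of "Suc k"] by simp
  have m1: "1 \<in> {1..m}" "m \<in> {1..m}" using assms(2) by auto
  have A: "mat_mult m (mat_shift Dn (Suc k) V) (Pmat m Dn U k) 1 m = V 1 1 * Pmat m Dn U k 1 m"
    unfolding mat_mult_def
    apply (subst sum_single[where a=1])
    using lowW m1 by (auto simp: lower_triangular_def mat_shift_def W11')
  have B: "mat_mult m (Pmat m Dn U k) V 1 m = Pmat m Dn U k 1 m * V 1 1"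
    unfolding mat_mult_def
    apply (subst sum_single[where a=m])
    using assms(4,7) m1 by (auto simp: lower_triangular_def)
  show ?thesis using main m1 A B by (simp add: mult.commute)
qed

end
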